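(* Let $K$ be a semifield. Let $P$ be a polygon with vertex set $V$ and a non-empty dissection $D$, and let $d=\{\zeta,\eta\}\in D$ be such that $D = \{d\}\cup D_2$ where $D_2$ is a dissection of the subpolygon $P_2$ with vertex set $V_2 = \{\varepsilon \in V : \eta \le \varepsilon \le \zeta\}$. Let $U_1 = \{\varepsilon\in V : \zeta<\varepsilon<\eta\}$, $U_2 = \{\varepsilon\in V : \eta<\varepsilon<\zeta\}$, and let $\alpha \in U_1$, $\beta \in U_2$. Let $f : \operatorname{diag}(P) \to K$ be a map such that $f|_{\operatorname{diag}(P_2)}$ satisfies the $T$-path formula with respect to $D_2$. Then \[ f(\zeta,\eta)^{-1}\big[ f(\alpha,\zeta)f(\eta,\beta) + f(\alpha,\eta)f(\zeta,\beta) \big] = \sum_{\pi\in\mathcal{T}_{P,D}(\alpha,\beta)} f(\pi). \]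
   Context: A semifield is a set $K$ with binary operations $+,\cdot$ such that $+$ is associative and commutative, $(K,\cdot)$ is a commutative group, and $\cdot$ distributes over $+$; $x/y := xy^{-1}$. A polygon is a finite set $V$ of at least three vertices with a cyclic order, pictured as a convex polygon in the plane with vertices anticlockwise. "$a\le\varepsilon\le b$" means $\varepsilon$ lies on the cyclic interval from $a$ to $b$ in the positive direction, endpoints included; "$<$" excludes the corresponding endpoint. A subpolygon is a subset of at least three vertices with induced cyclic order. A diagonal is a two-element subset of the vertex set (edges included); $\operatorname{diag}(Q)$ is the set of diagonals of $Q$; non-edges are internal. Diagonals cross if they consist of four distinct vertices $\alpha,\beta,\gamma,\delta$ appearing cyclically as $\alpha,\gamma,\beta,\delta$ or $\alpha,\delta,\beta,\gamma$. A dissection is a set of pairwise non-crossing internal diagonals. For a dissection $D$ of a polygon $Q$ and vertices $\pi_1\neq\pi_p$, a $T$-path from $\pi_1$ to $\pi_p$ is a tuple $(\pi_1,\dots,\pi_p)$ of vertices of $Q$ with: (i) $\{\pi_1,\pi_2\},\dots,\{\pi_{p-1},\pi_p\}$ pairwise different diagonals; (ii) no $\{\pi_i,\pi_{i+1}\}$ crosses a diagonal of $D$; (iii) each $\{\pi_{2j},\pi_{2j+1}\}$ lies in $D$, and these cross the segment $\{\pi_1,\pi_p\}$ at pairwise different points progressing monotonically from $\pi_1$ to $\pi_p$. $\mathcal{T}_{Q,D}(\alpha,\beta)$ is the set of these. With $f(\alpha,\beta):=f(\{\alpha,\beta\})$, $f(\pi) := \prod_{i\text{ odd}} f(\pi_i,\pi_{i+1})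 / \prod_{j\text{ even}} f(\pi_j,\pi_{j+1})$. A map $g:\operatorname{diag}(Q)\to K$ satisfies the $T$-path formula with respect to $D$ if $g(\alpha,\beta) = \sum_{\pi\in\mathcal{T}_{Q,D}(\alpha,\beta)} g(\pi)$ for all vertices $\alpha\neq\beta$ of $Q$. *)

theory Defs
  imports Main
begin

class semifield = ab_semigroup_add + comm_monoid_mult + inverse +
  assumes sf_left_inverse: "inverse a * a = 1"
  assumes sf_divide: "a / b = a * inverse b"
  assumes sf_distrib: "(a + b) * c = a * c + b * c"

text \<open>Sum over a finite non-empty set in a commutative semigroup (no zero needed).\<close>

definition nesum :: "('a \<Rightarrow> 'k::ab_semigroup_add) \<Rightarrow> 'a set \<Rightarrow> 'k" where
  "nesum g A = (let a = (SOME a. a \<in> A) in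
                  Finite_Set.fold (\<lambda>x s. g x + s) (g a) (A - {a}))"

text \<open>Vertices are elements of a linearly ordered type; a polygon is a finite set
  of at least three vertices, its cyclic order being the one induced by the linear
  order (every cyclic order on a finite set arises this way).\<close>

definition polygon :: "'v::linorder set \<Rightarrow> bool" where
  "polygon V \<longleftrightarrow> finite V \<and> card V \<ge> 3"

definition cyc_cc :: "'v::linorder \<Rightarrow> 'v \<Rightarrow> 'v \<Rightarrow> bool" where
  "cyc_cc a e b \<longleftrightarrow> (if a \<le> b then a \<le> e \<and> e \<le> b else a \<le> e \<or> e \<le> b)"

definition cyc_oo :: "'v::linorder \<Rightarrow> 'v \<Rightarrow> 'v \<Rightarrow> bool" where
  "cyc_oo a e b \<longleftrightarrow> cyc_cc a e b \<and> e \<noteq> a \<and> e \<noteq> b"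

definition diag :: "'v set \<Rightarrow> 'v set set" where
  "diag Q = {{a, b} | a b. a \<in> Q \<and> b \<in> Q \<and> a \<noteq> b}"

definition is_edge :: "'v::linorder set \<Rightarrow> 'v set \<Rightarrow> bool" where
  "is_edge Q d \<longleftrightarrow> d \<in> diag Q \<and>
     (\<exists>a b. d = {a, b} \<and> \<not> (\<exists>e\<in>Q. cyc_oo a e b))"

definition internal :: "'v::linorder set \<Rightarrow> 'v set \<Rightarrow> bool" where
  "internal Q d \<longleftrightarrow> d \<in> diag Q \<and> \<not> is_edge Q d"

definition crosses :: "'v::linorder set \<Rightarrow> 'v set \<Rightarrow> bool" where
  "crosses d1 d2 \<longleftrightarrow> (\<exists>a b c e. d1 = {a, b} \<and> d2 = {c, e} \<and>
       distinct [a, b, c, e] \<and> cyc_oo a c b \<and> cyc_oo b e a)"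

definition dissection :: "'v::linorder set \<Rightarrow> 'v set set \<Rightarrow> bool" where
  "dissection Q D \<longleftrightarrow> (\<forall>d\<in>D. internal Q d) \<and> (\<forall>d1\<in>D. \<forall>d2\<in>D. \<not> crosses d1 d2)"

definition step :: "'v list \<Rightarrow> nat \<Rightarrow> 'v set" where
  "step \<pi> k = {\<pi> ! k, \<pi> ! Suc k}"

definition side_towards :: "'v::linorder set \<Rightarrow> 'v \<Rightarrow> 'v set" where
  "side_towards d b = {e. \<exists>x y. d = {x, y} \<and> cyc_oo x b y \<and> cyc_cc x e y}"

text \<open>Diagonal d' meets the segment {a,b} strictly after diagonal d (going from a
  to b), both crossing the segment and being non-crossing: d' lies on the b-side of d.\<close>
definition cross_before :: "'v::linorder \<Rightarrow> 'v \<Rightarrow> 'v set \<Rightarrow> 'v set \<Rightarrow> bool" where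
  "cross_before a b d d' \<longleftrightarrow> d \<noteq> d' \<and> d' \<subseteq> side_towards d b"

text \<open>T-paths as lists [pi_1, ..., pi_p]; step k (0-based) is the step
  {pi_(k+1), pi_(k+2)}, so the paper's even steps are the odd k.\<close>
definition Tpaths :: "'v::linorder set \<Rightarrow> 'v set set \<Rightarrow> 'v \<Rightarrow> 'v \<Rightarrow> 'v list set" where
  "Tpaths Q D a b = {\<pi>. length \<pi> \<ge> 2 \<and> hd \<pi> = a \<and> last \<pi> = b \<and> set \<pi> \<subseteq> Q \<and>
     (\<forall>k < length \<pi> - 1. step \<pi> k \<in> diag Q) \<and>
     (\<forall>k < length \<pi> - 1. \<forall>l < length \<pi> - 1. k \<noteq> l \<longrightarrow> step \<pi> k \<noteq> step \<pi> l) \<and>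
     (\<forall>k < length \<pi> - 1. \<forall>d\<in>D. \<not> crosses (step \<pi> k) d) \<and>
     (\<forall>k < length \<pi> - 1. odd k \<longrightarrow> step \<pi> k \<in> D \<and> crosses (step \<pi> k) {a, b}) \<and>
     (\<forall>k < length \<pi> - 1. \<forall>l < length \<pi> - 1. odd k \<and> odd l \<and> k < l \<longrightarrow>
          cross_before a b (step \<pi> k) (step \<pi> l))}"

definition tweight :: "('v set \<Rightarrow> 'k::semifield) \<Rightarrow> 'v list \<Rightarrow> 'k" where
  "tweight f \<pi> = (\<Prod>k\<in>{k. k < length \<pi> - 1 \<and> even k}. f (step \<pi> k)) /
                  (\<Prod>k\<in>{k. k < length \<pi> - 1 \<and> odd k}. f (step \<pi> k))"

definition T_formula :: "'v::linorder set \<Rightarrow> 'v set set \<Rightarrow> ('v set \<Rightarrow> 'k::semifield) \<Rightarrow> bool" where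
  "T_formula Q D g \<longleftrightarrow> (\<forall>a\<in>Q. \<forall>b\<in>Q. a \<noteq> b \<longrightarrow> g {a, b} = nesum (tweight g) (Tpaths Q D a b))"

end

theory Submission
  imports Defs
begin

lemma oo_iff: "cyc_oo a e b \<longleftrightarrow> e \<noteq> a \<and> e \<noteq> b \<and> (if a \<le> b then a < e \<and> e < b else a < e \<or> e < b)"
  unfolding cyc_oo_def cyc_cc_def by (auto simp: order.order_iff_strict)

lemma cc_iff: "cyc_cc a e b \<longleftrightarrow> e = a \<or> e = b \<or> cyc_oo a e b"
  unfolding cyc_oo_def cyc_cc_def by auto

lemma oo_sides: "a \<noteq> b \<Longrightarrow> e \<noteq> a \<Longrightarrow> e \<noteq> b \<Longrightarrow> cyc_oo a e b \<longleftrightarrow> \<not> cyc_oo b e a"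
  unfolding oo_iff by auto

lemma crosses_iff: "crosses {a,b} {c,e} \<longleftrightarrow> distinct [a,b,c,e] \<and> (cyc_oo a c b \<longleftrightarrow> cyc_oo b e a)"
proof
  assume "crosses {a,b} {c,e}"
  then obtain a' b' c' e' where h: "{a,b} = {a',b'}" "{c,e} = {c',e'}" "distinct [a',b',c',e']"
    "cyc_oo a' c' b'" "cyc_oo b' e' a'" unfolding crosses_def by blast
  from h(1,2) have "(a=a' \<and> b=b' \<or> a=b' \<and> b=a') \<and> (c=c' \<and> e=e' \<or> c=e' \<and> e=c')"
    by (auto simp: doubleton_eq_iff)
  with h(3-5) show "distinct [a,b,c,e] \<and> (cyc_oo a c b \<longleftrightarrow> cyc_oo b e a)"
    unfolding oo_iff by (auto split: if_splits)
next
  assume h: "distinct [a,b,c,e] \<and> (cyc_oo a c b \<longleftrightarrow> cyc_oo b e a)"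
  show "crosses {a,b} {c,e}"
  proof (cases "cyc_oo a c b")
    case True
    then show ?thesis using h unfolding crosses_def by blast
  next
    case False
    with h have "cyc_oo a e b" "cyc_oo b c a" using oo_sides[of a b e] oo_sides[of b a c] by auto
    moreover have "{c,e} = {e,c}" by auto
    ultimately show ?thesis using h unfolding crosses_def by fastforce
  qed
qed

lemma crosses_sym: "crosses c1 c2 \<longleftrightarrow> crosses c2 c1"
proof -
  have "crosses c1 c2 \<Longrightarrow> crosses c2 c1" for c1 c2 :: "'a set"
  proof -
    assume "crosses c1 c2"
    then obtain a b c e where h: "c1 = {a,b}" "c2 = {c,e}" unfolding crosses_def by blast
    with \<open>crosses c1 c2\<close> have "distinct [a,b,c,e] \<and> (cyc_oo a c b \<longleftrightarrow> cyc_oo b e a)"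
      using crosses_iff by metis
    then have "distinct [c,e,a,b] \<and> (cyc_oo c a e \<longleftrightarrow> cyc_oo e b c)"
      unfolding oo_iff by (auto split: if_splits)
    then show ?thesis using h crosses_iff by metis
  qed
  then show ?thesis by blast
qed

lemma oo_iff2: "cyc_oo a e b \<longleftrightarrow> (a<e \<and> e<b) \<or> (e<b \<and> b<a) \<or> (b<a \<and> a<e)"
  unfolding oo_iff by (auto split: if_splits)
lemma cc_iff2: "cyc_cc a e b \<longleftrightarrow> e = a \<or> e = b \<or> (a<e \<and> e<b) \<or> (e<b \<and> b<a) \<or> (b<a \<and> a<e)"
  unfolding cc_iff oo_iff2 by auto
lemma crosses_iff2: "crosses {a,b} {c,e} \<longleftrightarrow> a \<noteq> b \<and> a \<noteq> c \<and> a \<noteq> e \<and> b \<noteq> c \<and> b \<noteq> e \<and> c \<noteq> e \<and> (cyc_oo a c b \<longleftrightarrow> cyc_oo b e a)"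
  unfolding crosses_iff by auto

lemmas geo_simps = crosses_iff2 cc_iff2 oo_iff2
lemmas lin_facts = less_trans less_irrefl linorder_neqE

lemma side_eq: "cyc_oo x b y \<Longrightarrow> side_towards {x,y} b = {v. cyc_cc x v y}"
  unfolding side_towards_def
  apply (auto simp: doubleton_eq_iff)
  unfolding oo_iff cc_iff by (auto split: if_splits)

lemma nc_split:
  assumes "\<not> crosses {s,t} {x,y}" "{s,t} \<noteq> {x,y}" "s \<noteq> t" "x \<noteq> y"
  shows "(cyc_cc x s y \<and> cyc_cc x t y) \<or> (cyc_cc y s x \<and> cyc_cc y t x)"
  using assms unfolding geo_simps doubleton_eq_iff by (smt (verit) lin_facts)

lemma G1:
  assumes "cyc_cc x u y" "cyc_cc x v y" "cyc_cc y s x" "cyc_cc y t x"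
  shows "\<not> crosses {u,v} {s,t}"
  using assms unfolding geo_simps by (smt (verit) lin_facts)

lemma G2:
  assumes "cyc_oo x b y" "cyc_oo y a x" "p = x \<or> p = y"
    "crosses {a,p} {s,t}" "\<not> crosses {s,t} {x,y}"
  shows "crosses {s,t} {a,b} \<and> \<not> (cyc_cc x s y \<and> cyc_cc x t y)"
  using assms unfolding geo_simps by (smt (verit) lin_facts)

lemma G3:
  assumes "cyc_oo x b y" "cyc_oo y a x" "q = x \<or> q = y"
    "cyc_cc x s y" "cyc_cc x t y" "crosses {s,t} {q,b}"
  shows "crosses {s,t} {a,b}"
  using assms unfolding geo_simps by (smt (verit) lin_facts)

lemma G_e:
  assumes "cyc_oo x b y" "cyc_oo y a x"
  shows "crosses {x,y} {a,b}"
  using assms unfolding geo_simps by (smt (verit) lin_facts)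

lemma B1:
  assumes "cyc_oo y a x" "cyc_cc x p y" "\<not> crosses {a,p} {x,y}" "a \<noteq> p" "x \<noteq> y"
  shows "p = x \<or> p = y"
  using assms unfolding geo_simps by (smt (verit) lin_facts)

lemma B3:
  assumes "cyc_oo x b y" "cyc_oo y a x" "cyc_cc x s y" "cyc_cc x t y" "crosses {s,t} {a,b}"
    "y \<in> side_towards {s,t} b"
  shows "s = y \<or> t = y"
proof -
  from assms(5) have "cyc_oo s b t \<or> cyc_oo t b s" unfolding geo_simps by (smt (verit) lin_facts)
  then show ?thesis
  proof
    assume "cyc_oo s b t"
    then have "cyc_cc s y t" using assms(6) side_eq by fastforce
    then show ?thesis using assms(1-5) \<open>cyc_oo s b t\<close> unfolding geo_simps by (smt (verit) lin_facts)
  next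
    assume "cyc_oo t b s"
    then have "cyc_cc t y s" using assms(6) side_eq[of t b s] by (auto simp: insert_commute)
    then show ?thesis using assms(1-5) \<open>cyc_oo t b s\<close> unfolding geo_simps by (smt (verit) lin_facts)
  qed
qed

lemma B4:
  assumes "cyc_oo x b y" "cyc_oo y a x" "q = x \<or> q = y" "x \<noteq> y" "cyc_cc x p y" "p \<noteq> x" "p \<noteq> y"
    "crosses {q,p} {a,b}" "r \<noteq> q" "r = x \<or> r = y"
  shows "r \<notin> side_towards {q,p} b"
proof -
  from assms(8) have "cyc_oo q b p \<or> cyc_oo p b q" unfolding geo_simps by (smt (verit) lin_facts)
  then show ?thesis
  proof
    assume h: "cyc_oo q b p"
    show ?thesis unfolding side_eq[OF h] mem_Collect_eq using assms h unfolding geo_simps by (smt (verit) lin_facts)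
  next
    assume h: "cyc_oo p b q"
    show ?thesis unfolding insert_commute[of q p] side_eq[OF h] mem_Collect_eq using assms h unfolding geo_simps by (smt (verit) lin_facts)
  qed
qed

lemma cfc_add: "comp_fun_commute (\<lambda>x s. (g x :: 'k::ab_semigroup_add) + s)"
  unfolding comp_fun_commute_def by (auto simp: fun_eq_iff add.left_commute)

lemma fold_add_ins:
  assumes "finite B" "b \<notin> B"
  shows "Finite_Set.fold (\<lambda>x s. (g x :: 'k::ab_semigroup_add) + s) z (insert b B)
         = g b + Finite_Set.fold (\<lambda>x s. g x + s) z B"
proof -
  have cf: "comp_fun_commute_on UNIV (\<lambda>x s. (g x :: 'k::ab_semigroup_add) + s)"
    using cfc_add[of g] comp_fun_commute_def' by metis
  show ?thesis by (rule comp_fun_commute_on.fold_insert[OF cf]) (use assms in auto)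
qed

lemma fold_add_shift:
  assumes "finite B"
  shows "Finite_Set.fold (\<lambda>x s. (g x :: 'k::ab_semigroup_add) + s) (z + w) B
         = Finite_Set.fold (\<lambda>x s. g x + s) z B + w"
  using assms
proof (induction B rule: finite_induct)
  case empty then show ?case by simp
next
  case (insert b B)
  then show ?case by (simp add: fold_add_ins add.assoc)
qed

lemma nesum_any:
  assumes "finite A" "a \<in> A"
  shows "nesum g A = Finite_Set.fold (\<lambda>x s. g x + s) (g a) (A - {a})"
proof -
  define a0 where "a0 = (SOME a. a \<in> A)"
  have a0: "a0 \<in> A" unfolding a0_def using assms(2) by (rule someI)
  have n: "nesum g A = Finite_Set.fold (\<lambda>x s. g x + s) (g a0) (A - {a0})"
    unfolding nesum_def a0_def Let_def by simp
  show ?thesis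
  proof (cases "a0 = a")
    case True then show ?thesis using n by simp
  next
    case False
    define R where "R = A - {a, a0}"
    have fR: "finite R" "a \<notin> R" "a0 \<notin> R" using assms unfolding R_def by auto
    have e1: "A - {a0} = insert a R" and e2: "A - {a} = insert a0 R"
      using False assms a0 unfolding R_def by auto
    have "Finite_Set.fold (\<lambda>x s. g x + s) (g a0) (A - {a0}) = g a + Finite_Set.fold (\<lambda>x s. g x + s) (g a0) R"
      unfolding e1 by (rule fold_add_ins[OF fR(1,2)])
    also have "\<dots> = Finite_Set.fold (\<lambda>x s. g x + s) (g a0 + g a) R"
      using fold_add_shift[OF fR(1), of g "g a0" "g a"] by (metis add.commute)
    also have "\<dots> = Finite_Set.fold (\<lambda>x s. g x + s) (g a + g a0) R" by (metis add.commute)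
    also have "\<dots> = g a0 + Finite_Set.fold (\<lambda>x s. g x + s) (g a) R"
      using fold_add_shift[OF fR(1), of g "g a" "g a0"] by (metis add.commute)
    also have "\<dots> = Finite_Set.fold (\<lambda>x s. g x + s) (g a) (A - {a})"
      unfolding e2 by (rule fold_add_ins[OF fR(1,3), symmetric])
    finally show ?thesis using n by simp
  qed
qed

lemma nesum_single: "nesum g {x} = g x"
  using nesum_any[of "{x}" x g] by simp

lemma nesum_insert:
  assumes "finite A" "A \<noteq> {}" "x \<notin> A"
  shows "nesum g (insert x A) = g x + nesum g A"
proof -
  obtain a where a: "a \<in> A" using assms(2) by auto
  have fR: "finite (A - {a})" "a \<notin> A - {a}" using assms by auto
  have "nesum g (insert x A) = Finite_Set.fold (\<lambda>x s. g x + s) (g x) A"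
    using nesum_any[of "insert x A" x g] assms by simp
  also have "A = insert a (A - {a})" using a by auto
  then have "Finite_Set.fold (\<lambda>x s. g x + s) (g x) A = g a + Finite_Set.fold (\<lambda>x s. g x + s) (g x) (A - {a})"
    using fold_add_ins[OF fR] by metis
  also have "\<dots> = Finite_Set.fold (\<lambda>x s. g x + s) (g x + g a) (A - {a})"
    using fold_add_shift[OF fR(1), of g "g x" "g a"] by (metis add.commute)
  also have "\<dots> = Finite_Set.fold (\<lambda>x s. g x + s) (g a) (A - {a}) + g x"
    using fold_add_shift[OF fR(1), of g "g a" "g x"] by (metis add.commute)
  also have "\<dots> = g x + nesum g A" using nesum_any[OF assms(1) a] by (metis add.commute)
  finally show ?thesis .
qed

lemma nesum_cong:
  assumes "finite A" "A \<noteq> {}" "\<And>x. x \<in> A \<Longrightarrow> g x = h x"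
  shows "nesum g A = nesum h A"
proof -
  show ?thesis using assms
  proof (induction A rule: finite_ne_induct)
    case (singleton x) then show ?case by (simp add: nesum_single)
  next
    case (insert x F) then show ?case by (simp add: nesum_insert)
  qed
qed

lemma nesum_mult:
  assumes "finite A" "A \<noteq> {}"
  shows "nesum (\<lambda>x. c * g x) A = c * (nesum g A :: 'k::semifield)"
  using assms
proof (induction A rule: finite_ne_induct)
  case (singleton x) then show ?case by (simp add: nesum_single)
next
  case (insert x F) then show ?case using sf_distrib[of "g x" "nesum g F" c] by (simp add: nesum_insert mult.commute)
qed

lemma nesum_reindex:
  assumes "finite A" "A \<noteq> {}" "inj_on h A"
  shows "nesum g (h ` A) = nesum (g \<circ> h) A"
proof -
  show ?thesis using assms
  proof (induction A rule: finite_ne_induct)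
    case (singleton x) then show ?case by (simp add: nesum_single)
  next
    case (insert x F)
    then have "h x \<notin> h ` F" by auto
    then show ?case using insert by (simp add: nesum_insert)
  qed
qed

lemma nesum_union:
  assumes "finite A" "A \<noteq> {}" "finite B" "B \<noteq> {}" "A \<inter> B = {}"
  shows "nesum g (A \<union> B) = nesum g A + nesum g B"
  using assms
proof (induction A rule: finite_ne_induct)
  case (singleton x)
  then show ?case by (simp add: nesum_insert nesum_single)
next
  case (insert x F)
  then have "nesum g (insert x F \<union> B) = g x + nesum g (F \<union> B)"
    using nesum_insert[of "F \<union> B" x g] by auto
  then show ?case using insert by (simp add: nesum_insert add.assoc)
qed

lemma sf_right_inverse: "(a::'k::semifield) * inverse a = 1"
  using sf_left_inverse[of a] by (simp add: mult.commute)

lemma sf_inverse_mult: "inverse ((a::'k::semifield) * b) = inverse a * inverse b"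
proof -
  have "inverse (a * b) = inverse (a * b) * (a * inverse a) * (b * inverse b)"
    by (simp add: sf_right_inverse)
  also have "\<dots> = (inverse (a * b) * (a * b)) * inverse a * inverse b"
    by (simp add: mult_ac)
  finally show ?thesis by (simp add: sf_left_inverse)
qed

lemma Tpaths_mem: "\<pi> \<in> Tpaths Q D a b \<longleftrightarrow> length \<pi> \<ge> 2 \<and> hd \<pi> = a \<and> last \<pi> = b \<and> set \<pi> \<subseteq> Q \<and>
     (\<forall>k < length \<pi> - 1. step \<pi> k \<in> diag Q) \<and>
     (\<forall>k < length \<pi> - 1. \<forall>l < length \<pi> - 1. k \<noteq> l \<longrightarrow> step \<pi> k \<noteq> step \<pi> l) \<and>
     (\<forall>k < length \<pi> - 1. \<forall>d\<in>D. \<not> crosses (step \<pi> k) d) \<and>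
     (\<forall>k < length \<pi> - 1. odd k \<longrightarrow> step \<pi> k \<in> D \<and> crosses (step \<pi> k) {a, b}) \<and>
     (\<forall>k < length \<pi> - 1. \<forall>l < length \<pi> - 1. odd k \<and> odd l \<and> k < l \<longrightarrow>
          cross_before a b (step \<pi> k) (step \<pi> l))"
  unfolding Tpaths_def by simp

lemma diag_mem: "c \<in> diag Q \<longleftrightarrow> (\<exists>s t. c = {s,t} \<and> s \<in> Q \<and> t \<in> Q \<and> s \<noteq> t)"
  unfolding diag_def by auto

lemma cross_before_indep: "cross_before a b c c' = cross_before a' b c c'"
  unfolding cross_before_def by simp

lemma crosses_distinct: "crosses c {q,b} \<Longrightarrow> q \<notin> c"
  unfolding crosses_def by (auto simp: doubleton_eq_iff)

lemma no_even_edge: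
  assumes "length \<pi> \<ge> 2" "last \<pi> = b" "y \<noteq> b" "even m" "m \<ge> 1" "m < length \<pi> - 1"
    "step \<pi> m = {x,y}"
    "\<And>k. odd k \<Longrightarrow> k < length \<pi> - 1 \<Longrightarrow> k + 1 \<ge> m \<Longrightarrow> y \<notin> step \<pi> k"
  shows False
proof -
  obtain j where j: "m = Suc j" using assms(5) by (cases m) auto
  have oj: "odd j" using assms(4) j by simp
  have "\<pi> ! m \<in> step \<pi> j" unfolding step_def j by simp
  then have "\<pi> ! m \<noteq> y" using assms(8)[OF oj] assms(6) j by auto
  then have y: "\<pi> ! Suc m = y" using assms(7) unfolding step_def by (auto simp: doubleton_eq_iff)
  show False
  proof (cases "Suc m = length \<pi> - 1")
    case True
    have "\<pi> \<noteq> []" using assms(1) by auto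
    then have "last \<pi> = y" using y True by (simp add: last_conv_nth)
    then show False using assms(2,3) by simp
  next
    case False
    then have "Suc m < length \<pi> - 1" using assms(6) by simp
    moreover have "y \<in> step \<pi> (Suc m)" unfolding step_def using y by simp
    ultimately show False using assms(8)[of "Suc m"] assms(4) by simp
  qed
qed

locale fwd_setting =
  fixes Q :: "'v::linorder set" and E E' :: "'v set set" and x y a b p q :: 'v
  assumes E_diag: "\<And>c. c \<in> E \<Longrightarrow> c \<in> diag Q"
    and E_nc: "\<And>c1 c2. c1 \<in> E \<Longrightarrow> c2 \<in> E \<Longrightarrow> \<not> crosses c1 c2"
    and e_in: "{x,y} \<in> E" and xy: "x \<noteq> y"
    and b_side: "cyc_oo x b y" and a_side: "cyc_oo y a x" and aQ: "a \<in> Q"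
    and H1: "\<And>c v. c \<in> E \<Longrightarrow> crosses c {a,b} \<Longrightarrow> v \<in> c \<Longrightarrow> cyc_cc x v y"
    and E'_sub: "E' \<subseteq> E" and e_notin: "{x,y} \<notin> E'"
    and E'_all: "\<And>c. c \<in> E \<Longrightarrow> c \<noteq> {x,y} \<Longrightarrow> (\<forall>v\<in>c. cyc_cc x v y) \<Longrightarrow> c \<in> E'"
    and pq: "{p,q} = {x,y}" "p \<noteq> q"
begin

abbreviation "Q' \<equiv> {v \<in> Q. cyc_cc x v y}"

lemma a_not: "\<not> cyc_cc x a y" using a_side unfolding geo_simps by (smt (verit) lin_facts)

lemma pq_cases: "(p = x \<and> q = y) \<or> (p = y \<and> q = x)" using pq by (auto simp: doubleton_eq_iff)

lemma xyQ: "x \<in> Q" "y \<in> Q" using E_diag[OF e_in] unfolding diag_mem by (auto simp: doubleton_eq_iff)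

lemma pq_in: "p \<in> Q'" "q \<in> Q'" "p \<noteq> a" "q \<noteq> a" "a \<notin> Q'"
  using pq_cases xyQ a_not by (auto simp: cc_iff)

lemma E_pair: assumes "c \<in> E" obtains s t where "c = {s,t}" "s \<in> Q" "t \<in> Q" "s \<noteq> t"
  using E_diag[OF assms] unfolding diag_mem by auto

lemma step_nc:
  assumes "cyc_cc x u y" "cyc_cc x v y" "c \<in> E" "c \<notin> E'"
  shows "\<not> crosses {u,v} c"
proof -
  obtain s t where c: "c = {s,t}" "s \<noteq> t" using E_pair[OF assms(3)] by metis
  have "cyc_cc y s x \<and> cyc_cc y t x"
  proof (cases "c = {x,y}")
    case True then show ?thesis using c by (auto simp: doubleton_eq_iff cc_iff)
  next
    case False
    then have "\<not> (\<forall>v\<in>c. cyc_cc x v y)" using E'_all assms by blast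
    moreover have "\<not> crosses {s,t} {x,y}" using E_nc[OF assms(3) e_in] c by simp
    ultimately show ?thesis using nc_split[of s t x y] c False xy by auto
  qed
  then show ?thesis using G1 assms(1,2) c by blast
qed

lemma step0_nc:
  assumes "c \<in> E" shows "\<not> crosses {a,p} c"
proof
  assume cr: "crosses {a,p} c"
  obtain s t where c: "c = {s,t}" using E_pair[OF assms] by metis
  have "\<not> crosses {s,t} {x,y}" using E_nc[OF assms e_in] c by simp
  then have "crosses {s,t} {a,b} \<and> \<not> (cyc_cc x s y \<and> cyc_cc x t y)"
    using G2[OF b_side a_side _ cr[unfolded c]] pq_cases by blast
  then show False using H1[OF assms] c by auto
qed

lemma tau_edge_only0:
  assumes tau: "\<tau> \<in> Tpaths Q' E' q b" and j: "j < length \<tau> - 1" "step \<tau> j = {x,y}"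
  shows "j = 0"
proof (rule ccontr)
  assume "j \<noteq> 0"
  show False
  proof (cases "odd j")
    case True
    then have "step \<tau> j \<in> E'" using tau j unfolding Tpaths_mem by blast
    then show False using j e_notin by simp
  next
    case False
    have "b \<noteq> q" using b_side pq_cases by (auto simp: oo_iff)
    show False
    proof (rule no_even_edge[of \<tau> b q j p])
      show "2 \<le> length \<tau>" "last \<tau> = b" using tau unfolding Tpaths_mem by auto
      show "q \<noteq> b" using \<open>b \<noteq> q\<close> by simp
      show "even j" "1 \<le> j" "j < length \<tau> - 1" using False \<open>j \<noteq> 0\<close> j by auto
      show "step \<tau> j = {p, q}" using j pq by simp
      fix k assume "odd k" "k < length \<tau> - 1"
      then have "crosses (step \<tau> k) {q,b}" using tau unfolding Tpaths_mem by blast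
      then show "q \<notin> step \<tau> k" by (rule crosses_distinct)
    qed
  qed
qed

lemma tau_step_Q':
  assumes tau: "\<tau> \<in> Tpaths Q' E' q b" and j: "j < length \<tau> - 1"
  obtains u v where "step \<tau> j = {u,v}" "u \<in> Q" "v \<in> Q" "cyc_cc x u y" "cyc_cc x v y" "u \<noteq> v"
  using tau j unfolding Tpaths_mem diag_mem by blast

lemma tau_step_nc:
  assumes tau: "\<tau> \<in> Tpaths Q' E' q b" and j: "j < length \<tau> - 1" and c: "c \<in> E"
  shows "\<not> crosses (step \<tau> j) c"
proof (cases "c \<in> E'")
  case True then show ?thesis using tau j unfolding Tpaths_mem by blast
next
  case False
  obtain u v where "step \<tau> j = {u,v}" "cyc_cc x u y" "cyc_cc x v y" using tau_step_Q'[OF tau j] by metis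
  then show ?thesis using step_nc c False by simp
qed

lemma tau_step_odd:
  assumes tau: "\<tau> \<in> Tpaths Q' E' q b" and j: "j < length \<tau> - 1" "odd j"
  shows "step \<tau> j \<in> E" "step \<tau> j \<in> E'" "crosses (step \<tau> j) {a,b}"
proof -
  show "step \<tau> j \<in> E'" using tau j unfolding Tpaths_mem by blast
  then show "step \<tau> j \<in> E" using E'_sub by blast
  have cr: "crosses (step \<tau> j) {q,b}" using tau j unfolding Tpaths_mem by blast
  obtain u v where uv: "step \<tau> j = {u,v}" "cyc_cc x u y" "cyc_cc x v y" using tau_step_Q'[OF tau j(1)] by metis
  show "crosses (step \<tau> j) {a,b}" using G3[OF b_side a_side _ uv(2,3)] cr uv(1) pq_cases by auto
qed

lemma fwd1:
  assumes tau: "\<tau> \<in> Tpaths Q' E' q b" and t1: "\<tau> ! 1 = p"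
  shows "a # tl \<tau> \<in> Tpaths Q E a b"
proof -
  have len: "length \<tau> \<ge> 2" and hd: "hd \<tau> = q" and lst: "last \<tau> = b" and st: "set \<tau> \<subseteq> Q'"
    using tau unfolding Tpaths_mem by auto
  obtain \<tau>' where \<tau>: "\<tau> = q # \<tau>'" using len hd by (cases \<tau>) auto
  have ne: "\<tau>' \<noteq> []" using len \<tau> by auto
  define \<pi> where "\<pi> = a # \<tau>'"
  have tl: "tl \<tau> = \<tau>'" using \<tau> by simp
  have lenp: "length \<pi> = length \<tau>" unfolding \<pi>_def \<tau> by simp
  have sS: "\<And>j. step \<pi> (Suc j) = step \<tau> (Suc j)" unfolding step_def \<pi>_def \<tau> by simp
  have s0: "step \<pi> 0 = {a,p}" using t1 unfolding step_def \<pi>_def \<tau> by simp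
  have ap_diag: "{a,p} \<in> diag Q" unfolding diag_mem using aQ pq_in by blast
  have "\<pi> \<in> Tpaths Q E a b"
    unfolding Tpaths_mem
  proof (intro conjI allI impI ballI)
    show "2 \<le> length \<pi>" using lenp len by simp
    show "hd \<pi> = a" unfolding \<pi>_def by simp
    show "last \<pi> = b" using lst ne unfolding \<pi>_def \<tau> by simp
    show "set \<pi> \<subseteq> Q" using st aQ unfolding \<pi>_def \<tau> by auto
  next
    fix k assume k: "k < length \<pi> - 1"
    show "step \<pi> k \<in> diag Q"
    proof (cases k)
      case 0 then show ?thesis using s0 ap_diag by simp
    next
      case (Suc j)
      obtain u v where "step \<tau> k = {u,v}" "u \<in> Q" "v \<in> Q" "u \<noteq> v"
        using tau_step_Q'[OF tau, of k] k lenp by metis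
      then show ?thesis using sS Suc unfolding diag_mem by auto
    qed
  next
    fix k l assume k: "k < length \<pi> - 1" and l: "l < length \<pi> - 1" and kl: "k \<noteq> l"
    have nota: "\<And>j. j < length \<tau> - 1 \<Longrightarrow> step \<tau> j \<noteq> {a,p}"
    proof -
      fix j assume "j < length \<tau> - 1"
      then obtain u v where "step \<tau> j = {u,v}" "cyc_cc x u y" "cyc_cc x v y" using tau_step_Q'[OF tau] by metis
      then show "step \<tau> j \<noteq> {a,p}" using a_not by auto
    qed
    show "step \<pi> k \<noteq> step \<pi> l"
    proof (cases k)
      case 0
      then obtain j where "l = Suc j" using kl by (cases l) auto
      then show ?thesis using 0 s0 sS nota[of l] l lenp by auto
    next
      case (Suc i)
      show ?thesis
      proof (cases l)
        case 0 then show ?thesis using Suc s0 sS nota[of k] k lenp by auto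
      next
        case (Suc j)
        then show ?thesis using \<open>k = Suc i\<close> sS tau k l kl lenp unfolding Tpaths_mem by metis
      qed
    qed
  next
    fix k d assume k: "k < length \<pi> - 1" and d: "d \<in> E"
    show "\<not> crosses (step \<pi> k) d"
    proof (cases k)
      case 0 then show ?thesis using s0 step0_nc d by simp
    next
      case (Suc j) then show ?thesis using sS tau_step_nc[OF tau, of k d] k d lenp by simp
    qed
  next
    fix k assume k: "k < length \<pi> - 1" and o: "odd k"
    then obtain j where kj: "k = Suc j" by (cases k) auto
    show "step \<pi> k \<in> E" using tau_step_odd(1)[OF tau, of k] k o sS kj lenp by simp
    show "crosses (step \<pi> k) {a, b}" using tau_step_odd(3)[OF tau, of k] k o sS kj lenp by simp
  next
    fix k l assume k: "k < length \<pi> - 1" and l: "l < length \<pi> - 1" and o: "odd k \<and> odd l \<and> k < l"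
    then obtain i j where "k = Suc i" "l = Suc j" by (cases k; cases l) auto
    then have "step \<pi> k = step \<tau> k" "step \<pi> l = step \<tau> l" using sS by auto
    moreover have "cross_before q b (step \<tau> k) (step \<tau> l)" using tau k l o lenp unfolding Tpaths_mem by auto
    ultimately show "cross_before a b (step \<pi> k) (step \<pi> l)" using cross_before_indep by metis
  qed
  then show ?thesis unfolding \<pi>_def tl .
qed

lemma fwd2:
  assumes tau: "\<tau> \<in> Tpaths Q' E' q b" and t1: "\<tau> ! 1 \<noteq> p"
  shows "a # p # \<tau> \<in> Tpaths Q E a b"
proof -
  have len: "length \<tau> \<ge> 2" and hd: "hd \<tau> = q" and lst: "last \<tau> = b" and st: "set \<tau> \<subseteq> Q'"
    using tau unfolding Tpaths_mem by auto
  have t0: "\<tau> ! 0 = q" using hd len by (cases \<tau>) auto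
  define \<pi> where "\<pi> = a # p # \<tau>"
  have lenp: "length \<pi> = Suc (Suc (length \<tau>))" unfolding \<pi>_def by simp
  have sS: "\<And>j. step \<pi> (Suc (Suc j)) = step \<tau> j" unfolding step_def \<pi>_def by simp
  have s0: "step \<pi> 0 = {a,p}" unfolding step_def \<pi>_def by simp
  have s1: "step \<pi> 1 = {x,y}" unfolding step_def \<pi>_def using t0 pq by simp
  have ap_diag: "{a,p} \<in> diag Q" unfolding diag_mem using aQ pq_in by blast
  have xy_diag: "{x,y} \<in> diag Q" using E_diag e_in by blast
  have idx: "\<And>k. k = 0 \<or> k = 1 \<or> (\<exists>j. k = Suc (Suc j))"
    by (metis One_nat_def not0_implies_Suc)
  have nota: "\<And>j. j < length \<tau> - 1 \<Longrightarrow> step \<tau> j \<noteq> {a,p}"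
  proof -
    fix j assume "j < length \<tau> - 1"
    then obtain u v where "step \<tau> j = {u,v}" "cyc_cc x u y" "cyc_cc x v y" using tau_step_Q'[OF tau] by metis
    then show "step \<tau> j \<noteq> {a,p}" using a_not by auto
  qed
  have not_e: "\<And>j. j < length \<tau> - 1 \<Longrightarrow> step \<tau> j \<noteq> {x,y}"
  proof
    fix j assume j: "j < length \<tau> - 1" "step \<tau> j = {x,y}"
    then have "j = 0" using tau_edge_only0[OF tau] by blast
    then have "{q, \<tau> ! 1} = {p,q}" using j t0 pq unfolding step_def by simp
    then show False using t1 pq(2) by (auto simp: doubleton_eq_iff)
  qed
  have apxy: "{a,p} \<noteq> {x,y}" using pq_in(3,4) pq by (auto simp: doubleton_eq_iff)
  have "\<pi> \<in> Tpaths Q E a b"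
    unfolding Tpaths_mem
  proof (intro conjI allI impI ballI)
    show "2 \<le> length \<pi>" using lenp by simp
    show "hd \<pi> = a" unfolding \<pi>_def by simp
    show "last \<pi> = b" using lst len unfolding \<pi>_def by (cases \<tau>) auto
    show "set \<pi> \<subseteq> Q" using st aQ pq_in unfolding \<pi>_def by auto
  next
    fix k assume k: "k < length \<pi> - 1"
    show "step \<pi> k \<in> diag Q"
      using idx[of k]
    proof (elim disjE exE)
      assume "k = 0" then show ?thesis using s0 ap_diag by simp
    next
      assume "k = 1" then show ?thesis using s1 xy_diag by simp
    next
      fix j assume kj: "k = Suc (Suc j)"
      have "j < length \<tau> - 1" using k kj lenp by simp
      then obtain u v where "step \<tau> j = {u,v}" "u \<in> Q" "v \<in> Q" "u \<noteq> v"
        using tau_step_Q'[OF tau, of j] by metis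
      then show ?thesis using sS kj unfolding diag_mem by auto
    qed
  next
    fix k l assume k: "k < length \<pi> - 1" and l: "l < length \<pi> - 1" and kl: "k \<noteq> l"
    have dt: "\<And>i j. i < length \<tau> - 1 \<Longrightarrow> j < length \<tau> - 1 \<Longrightarrow> i \<noteq> j \<Longrightarrow> step \<tau> i \<noteq> step \<tau> j"
      using tau unfolding Tpaths_mem by blast
    show "step \<pi> k \<noteq> step \<pi> l"
      using idx[of k]
    proof (elim disjE exE)
      assume k0: "k = 0"
      from idx[of l] show ?thesis
      proof (elim disjE exE)
        assume "l = 0" then show ?thesis using k0 kl by simp
      next
        assume "l = 1" then show ?thesis using k0 s0 s1 apxy by simp
      next
        fix j assume lj: "l = Suc (Suc j)" then have "j < length \<tau> - 1" using l lenp by simp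
        then show ?thesis using k0 lj s0 sS nota[of j] by auto
      qed
    next
      assume k1: "k = 1"
      from idx[of l] show ?thesis
      proof (elim disjE exE)
        assume "l = 0" then show ?thesis using k1 s0 s1 apxy by simp
      next
        assume "l = 1" then show ?thesis using k1 kl by simp
      next
        fix j assume lj: "l = Suc (Suc j)" then have "j < length \<tau> - 1" using l lenp by simp
        then show ?thesis using k1 lj s1 sS not_e[of j] by auto
      qed
    next
      fix i assume ki: "k = Suc (Suc i)"
      from idx[of l] show ?thesis
      proof (elim disjE exE)
        assume "l = 0" moreover have "i < length \<tau> - 1" using k ki lenp by simp
        ultimately show ?thesis using ki s0 sS nota[of i] by auto
      next
        assume "l = 1" moreover have "i < length \<tau> - 1" using k ki lenp by simp
        ultimately show ?thesis using ki s1 sS not_e[of i] by auto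
      next
        fix j assume lj: "l = Suc (Suc j)" then have "j < length \<tau> - 1" "i < length \<tau> - 1" "i \<noteq> j" using l k ki kl lenp by auto
        then show ?thesis using ki lj sS dt[of i j] by auto
      qed
    qed
  next
    fix k d assume k: "k < length \<pi> - 1" and d: "d \<in> E"
    show "\<not> crosses (step \<pi> k) d"
      using idx[of k]
    proof (elim disjE exE)
      assume "k = 0" then show ?thesis using s0 step0_nc d by simp
    next
      assume "k = 1" then show ?thesis using s1 E_nc e_in d by simp
    next
      fix j assume kj: "k = Suc (Suc j)"
      then show ?thesis using sS tau_step_nc[OF tau, of j d] k d lenp by simp
    qed
  next
    fix k assume k: "k < length \<pi> - 1" and o: "odd k"
    then have "k = 1 \<or> (\<exists>j. k = Suc (Suc j) \<and> odd j)" using idx[of k] by auto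
    then show "step \<pi> k \<in> E" "crosses (step \<pi> k) {a, b}"
      using s1 e_in G_e[OF b_side a_side] tau_step_odd[OF tau] k lenp sS by auto
  next
    fix k l assume k: "k < length \<pi> - 1" and l: "l < length \<pi> - 1" and o: "odd k \<and> odd l \<and> k < l"
    obtain j where lj: "l = Suc (Suc j)" "odd j" using idx[of l] o by auto
    have jl: "j < length \<tau> - 1" using l lj lenp by simp
    show "cross_before a b (step \<pi> k) (step \<pi> l)"
    proof (cases "k = 1")
      case True
      obtain u v where uv: "step \<tau> j = {u,v}" "cyc_cc x u y" "cyc_cc x v y" using tau_step_Q'[OF tau jl] by metis
      have "step \<tau> j \<noteq> {x,y}" using not_e jl by blast
      moreover have "step \<tau> j \<subseteq> side_towards {x,y} b" using uv side_eq[OF b_side] by auto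
      ultimately show ?thesis unfolding cross_before_def using True s1 sS lj by simp
    next
      case False
      then obtain i where ki: "k = Suc (Suc i)" "odd i" using idx[of k] o by auto
      have "cross_before q b (step \<tau> i) (step \<tau> j)" using tau ki lj jl o unfolding Tpaths_mem by auto
      then show ?thesis using sS ki lj cross_before_indep by metis
    qed
  qed
  then show ?thesis unfolding \<pi>_def .
qed

end

lemma orient:
  assumes "crosses {s,t} {a,b}"
  shows "(cyc_oo s b t \<and> cyc_oo t a s) \<or> (cyc_oo t b s \<and> cyc_oo s a t)"
  using assms unfolding geo_simps by (smt (verit) lin_facts)

lemma sub_side:
  assumes "cyc_oo x b y" "cyc_oo y a x" "cyc_cc y s x" "cyc_cc y t x" "crosses {s,t} {a,b}"
    "cyc_oo t a s" "cyc_cc t v s"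
  shows "cyc_cc y v x"
  using assms unfolding geo_simps by (smt (verit) lin_facts)

lemma strict_side:
  assumes "cyc_oo x b y" "cyc_oo y a x" "cyc_cc y s x" "cyc_cc y t x" "crosses {s,t} {a,b}"
    "cyc_oo t a s" "{s,t} \<noteq> {x,y}"
  shows "\<not> cyc_cc t x s \<or> \<not> cyc_cc t y s"
  using assms unfolding geo_simps doubleton_eq_iff by (smt (verit) lin_facts)

lemma diag_sub: "A \<subseteq> B \<Longrightarrow> diag A \<subseteq> diag B"
  unfolding diag_def by blast

lemma Tpaths_exist:
  assumes "finite Q" "\<forall>c\<in>E. c \<in> diag Q" "\<forall>c1\<in>E. \<forall>c2\<in>E. \<not> crosses c1 c2" "a \<in> Q" "b \<in> Q" "a \<noteq> b"
  shows "Tpaths Q E a b \<noteq> {}"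
  using assms
proof (induction "card Q" arbitrary: Q E a b rule: less_induct)
  case less
  note fin = less.prems(1) and Ed = less.prems(2) and Enc = less.prems(3) and aQ = less.prems(4)
    and bQ = less.prems(5) and ab = less.prems(6)
  show ?case
  proof (cases "\<exists>c\<in>E. crosses c {a,b}")
    case False
    have "[a,b] \<in> Tpaths Q E a b"
      unfolding Tpaths_mem
    proof (intro conjI allI impI ballI)
      fix k d assume "k < length [a,b] - 1" "d \<in> E"
      then show "\<not> crosses (step [a, b] k) d" using False crosses_sym unfolding step_def by auto
    qed (use aQ bQ ab in \<open>auto simp: step_def diag_mem\<close>)
    then show ?thesis by blast
  next
    case True
    define C where "C = {c\<in>E. crosses c {a,b}}"
    define \<mu> where "\<mu> c = card {v\<in>Q. v \<in> side_towards c a}" for c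
    obtain e0 where "e0 \<in> C" using True C_def by blast
    then obtain e where eC: "e \<in> C" and emin: "\<And>c. c \<in> C \<Longrightarrow> \<mu> e \<le> \<mu> c"
      using ex_has_least_nat[of "\<lambda>c. c \<in> C" e0 \<mu>] by blast
    have eE: "e \<in> E" and ecr: "crosses e {a,b}" using eC C_def by auto
    obtain s t where st: "e = {s,t}" using Ed eE unfolding diag_mem by blast
    obtain x y where exy: "e = {x,y}" and bs: "cyc_oo x b y" and as: "cyc_oo y a x"
      using orient[of s t a b] ecr st by (metis insert_commute)
    have xy: "x \<noteq> y" using bs unfolding oo_iff by auto
    have xyQ: "x \<in> Q" "y \<in> Q" using Ed eE exy unfolding diag_mem by (auto simp: doubleton_eq_iff)
    have mue: "\<mu> e = card {v\<in>Q. cyc_cc y v x}"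
      unfolding \<mu>_def exy insert_commute[of x y] side_eq[OF as] by simp
    have H1: "\<And>c v. c \<in> E \<Longrightarrow> crosses c {a,b} \<Longrightarrow> v \<in> c \<Longrightarrow> cyc_cc x v y"
    proof -
      fix c v assume cE: "c \<in> E" and ccr: "crosses c {a,b}" and vc: "v \<in> c"
      show "cyc_cc x v y"
      proof (cases "c = e")
        case True then show ?thesis using vc exy by (auto simp: cc_iff)
      next
        case False
        obtain s t where cst: "c = {s,t}" "s \<noteq> t" using Ed cE unfolding diag_mem by blast
        have "\<not> crosses {s,t} {x,y}" using Enc cE eE cst exy by simp
        then have sides: "(cyc_cc x s y \<and> cyc_cc x t y) \<or> (cyc_cc y s x \<and> cyc_cc y t x)"
          using nc_split[of s t x y] cst False exy xy by auto
        show ?thesis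
        proof (rule ccontr)
          assume nv: "\<not> cyc_cc x v y"
          then have ys: "cyc_cc y s x" "cyc_cc y t x" using sides vc cst by auto
          obtain s' t' where c': "c = {s',t'}" "cyc_oo t' a s'"
            using orient[of s t a b] ccr cst by (metis insert_commute)
          have ys': "cyc_cc y s' x" "cyc_cc y t' x" using ys c' cst by (auto simp: doubleton_eq_iff)
          have cr': "crosses {s',t'} {a,b}" using ccr c' by simp
          have muc: "\<mu> c = card {v\<in>Q. cyc_cc t' v s'}"
            unfolding \<mu>_def c'(1) insert_commute[of s' t'] side_eq[OF c'(2)] by simp
          have sub: "{v\<in>Q. cyc_cc t' v s'} \<subset> {v\<in>Q. cyc_cc y v x}"
          proof
            show "{v\<in>Q. cyc_cc t' v s'} \<subseteq> {v\<in>Q. cyc_cc y v x}"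
              using sub_side[OF bs as ys' cr' c'(2)] by auto
            have "{s',t'} \<noteq> {x,y}" using False c' exy by simp
            then have "\<not> cyc_cc t' x s' \<or> \<not> cyc_cc t' y s'"
              using strict_side[OF bs as ys' cr' c'(2)] by simp
            moreover have "cyc_cc y x x" "cyc_cc y y x" by (auto simp: cc_iff)
            ultimately show "{v\<in>Q. cyc_cc t' v s'} \<noteq> {v\<in>Q. cyc_cc y v x}" using xyQ by blast
          qed
          have "\<mu> c < \<mu> e" unfolding muc mue by (rule psubset_card_mono) (use fin sub in auto)
          moreover have "c \<in> C" using cE ccr C_def by simp
          ultimately show False using emin by fastforce
        qed
      qed
    qed
    define Q' where "Q' = {v\<in>Q. cyc_cc x v y}"
    define E' where "E' = {c\<in>E. \<forall>v\<in>c. cyc_cc x v y} - {{x,y}}"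
    have aQ': "a \<notin> Q'" using as unfolding Q'_def geo_simps by (smt (verit) lin_facts mem_Collect_eq)
    have cardQ': "card Q' < card Q"
      by (rule psubset_card_mono) (use fin aQ aQ' Q'_def in auto)
    have "Tpaths Q' E' y b \<noteq> {}"
    proof (rule less.hyps[OF cardQ'])
      show "finite Q'" using fin Q'_def by simp
      show "\<forall>c\<in>E'. c \<in> diag Q'"
      proof
        fix c assume "c \<in> E'"
        then have "c \<in> E" "\<forall>v\<in>c. cyc_cc x v y" unfolding E'_def by auto
        then show "c \<in> diag Q'" using Ed unfolding Q'_def diag_mem by fastforce
      qed
      show "\<forall>c1\<in>E'. \<forall>c2\<in>E'. \<not> crosses c1 c2" using Enc E'_def by auto
      show "y \<in> Q'" "b \<in> Q'" using xyQ bQ bs unfolding Q'_def by (auto simp: cc_iff)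
      show "y \<noteq> b" using bs unfolding oo_iff by auto
    qed
    then obtain \<tau> where tau: "\<tau> \<in> Tpaths Q' E' y b" by blast
    interpret fs: fwd_setting Q E E' x y a b x y
    proof
      show "\<And>c. c \<in> E \<Longrightarrow> c \<in> diag Q" using Ed by blast
      show "\<And>c1 c2. c1 \<in> E \<Longrightarrow> c2 \<in> E \<Longrightarrow> \<not> crosses c1 c2" using Enc by blast
      show "{x,y} \<in> E" using eE exy by simp
    qed (use xy bs as aQ H1 E'_def in auto)
    have "(if \<tau> ! 1 = x then a # tl \<tau> else a # x # \<tau>) \<in> Tpaths Q E a b"
      using fs.fwd1 fs.fwd2 tau unfolding Q'_def by auto
    then show ?thesis by blast
  qed
qed

lemma finite_diag: "finite Q \<Longrightarrow> finite (diag Q)"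
proof -
  assume "finite Q"
  moreover have "diag Q \<subseteq> Pow Q" unfolding diag_def by auto
  ultimately show ?thesis using finite_subset by blast
qed

lemma Tpaths_finite:
  assumes "finite Q" shows "finite (Tpaths Q D a b)"
proof -
  have "Tpaths Q D a b \<subseteq> {xs. set xs \<subseteq> Q \<and> length xs \<le> card (diag Q) + 1}"
  proof
    fix \<pi> assume p: "\<pi> \<in> Tpaths Q D a b"
    have "inj_on (step \<pi>) {..<length \<pi> - 1}" using p unfolding Tpaths_mem inj_on_def by auto
    moreover have "step \<pi> ` {..<length \<pi> - 1} \<subseteq> diag Q" using p unfolding Tpaths_mem by auto
    ultimately have "card {..<length \<pi> - 1} \<le> card (diag Q)"
      using card_inj_on_le finite_diag[OF assms] by blast
    then show "\<pi> \<in> {xs. set xs \<subseteq> Q \<and> length xs \<le> card (diag Q) + 1}" using p unfolding Tpaths_mem by auto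
  qed
  then show ?thesis using finite_lists_length_le[OF assms] finite_subset by blast
qed

lemma even_set_shift: "{k. k < Suc (Suc m) \<and> even k} = insert 0 ((\<lambda>j. Suc (Suc j)) ` {j. j < m \<and> even j})"
proof (rule set_eqI, rule iffI)
  fix k assume "k \<in> {k. k < Suc (Suc m) \<and> even k}"
  then show "k \<in> insert 0 ((\<lambda>j. Suc (Suc j)) ` {j. j < m \<and> even j})"
    by (cases k rule: nat.exhaust; cases "k - 1" rule: nat.exhaust) auto
qed auto

lemma odd_set_shift: "{k. k < Suc (Suc m) \<and> odd k} = insert 1 ((\<lambda>j. Suc (Suc j)) ` {j. j < m \<and> odd j})"
proof (rule set_eqI, rule iffI)
  fix k assume "k \<in> {k. k < Suc (Suc m) \<and> odd k}"
  then show "k \<in> insert 1 ((\<lambda>j. Suc (Suc j)) ` {j. j < m \<and> odd j})"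
    by (cases k rule: nat.exhaust; cases "k - 1" rule: nat.exhaust) auto
qed auto

lemma even_set_split: "0 < n \<Longrightarrow> {k. k < n \<and> even k} = insert 0 {k. k < n \<and> even k \<and> k \<noteq> 0}"
  by auto

context fwd_setting begin

abbreviation ext where "ext \<tau> \<equiv> (if \<tau> ! 1 = p then a # tl \<tau> else a # p # \<tau>)"

lemma tweight_ext:
  fixes f :: "'v set \<Rightarrow> 'k::semifield"
  assumes tau: "\<tau> \<in> Tpaths Q' E' q b"
  shows "tweight f (ext \<tau>) = f {a,p} * inverse (f {x,y}) * tweight f \<tau>"
proof -
  have len: "length \<tau> \<ge> 2" and hd: "hd \<tau> = q" using tau unfolding Tpaths_mem by auto
  obtain \<tau>' where \<tau>: "\<tau> = q # \<tau>'" using len hd by (cases \<tau>) auto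
  show ?thesis
  proof (cases "\<tau> ! 1 = p")
    case True
    define \<pi> where "\<pi> = a # \<tau>'"
    have ext: "ext \<tau> = \<pi>" using True \<tau> \<pi>_def by simp
    have lenp: "length \<pi> = length \<tau>" unfolding \<pi>_def \<tau> by simp
    have sS: "\<And>j. step \<pi> (Suc j) = step \<tau> (Suc j)" unfolding step_def \<pi>_def \<tau> by simp
    have s0: "step \<pi> 0 = {a,p}" using True unfolding step_def \<pi>_def \<tau> by simp
    have sS': "\<And>k. k \<noteq> 0 \<Longrightarrow> step \<pi> k = step \<tau> k" using sS by (metis not0_implies_Suc)
    have t0: "step \<tau> 0 = {x,y}" using True pq unfolding step_def \<tau> by (simp add: insert_commute)
    define N where "N = length \<tau> - 1"
    have N0: "0 < N" using len N_def by simp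
    define R where "R = (\<Prod>k\<in>{k. k < N \<and> even k \<and> k \<noteq> 0}. f (step \<tau> k))"
    define Od where "Od = (\<Prod>k\<in>{k. k < N \<and> odd k}. f (step \<tau> k))"
    have fin: "finite {k. k < N \<and> even k \<and> k \<noteq> 0}" by simp
    have Rp: "(\<Prod>k\<in>{k. k < N \<and> even k \<and> k \<noteq> 0}. f (step \<pi> k)) = R"
      unfolding R_def by (rule prod.cong) (auto simp: sS')
    have Op: "(\<Prod>k\<in>{k. k < N \<and> odd k}. f (step \<pi> k)) = Od"
      unfolding Od_def by (rule prod.cong) (auto simp: sS' dest!: odd_pos)
    have wp: "tweight f \<pi> = f {a,p} * R / Od"
      unfolding tweight_def lenp N_def[symmetric] even_set_split[OF N0]
      using prod.insert[OF fin, of 0] s0 Rp Op by simp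
    have wt: "tweight f \<tau> = f {x,y} * R / Od"
      unfolding tweight_def N_def[symmetric] even_set_split[OF N0] Od_def R_def
      using prod.insert[OF fin, of 0] t0 by simp
    show ?thesis unfolding ext wp wt sf_divide
      by (simp add: mult_ac sf_right_inverse)
  next
    case False
    define \<pi> where "\<pi> = a # p # \<tau>"
    have ext: "ext \<tau> = \<pi>" using False \<pi>_def by simp
    define m where "m = length \<tau> - 1"
    have lenp: "length \<pi> - 1 = Suc (Suc m)" unfolding \<pi>_def m_def using len by simp
    have sS: "\<And>j. step \<pi> (Suc (Suc j)) = step \<tau> j" unfolding step_def \<pi>_def by simp
    have s0: "step \<pi> 0 = {a,p}" unfolding step_def \<pi>_def by simp
    have s1: "step \<pi> 1 = {x,y}" unfolding step_def \<pi>_def \<tau> using pq by simp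
    have inj: "\<And>A. inj_on (\<lambda>j. Suc (Suc j)) A" by (simp add: inj_on_def)
    have "(\<Prod>k\<in>{k. k < length \<pi> - 1 \<and> even k}. f (step \<pi> k))
          = f {a,p} * (\<Prod>k\<in>{k. k < m \<and> even k}. f (step \<tau> k))"
      unfolding lenp even_set_shift
      by (subst prod.insert) (auto simp: prod.reindex[OF inj] s0 sS)
    moreover have "(\<Prod>k\<in>{k. k < length \<pi> - 1 \<and> odd k}. f (step \<pi> k))
          = f {x,y} * (\<Prod>k\<in>{k. k < m \<and> odd k}. f (step \<tau> k))"
      unfolding lenp odd_set_shift
      by (subst prod.insert) (use s1 in \<open>auto simp: prod.reindex[OF inj] sS\<close>)
    ultimately show ?thesis unfolding ext tweight_def m_def sf_divide
      by (simp add: mult_ac sf_inverse_mult)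
  qed
qed

lemma ext_1: "\<tau> \<in> Tpaths Q' E' q b \<Longrightarrow> ext \<tau> ! 1 = p"
  by (cases "\<tau> ! 1 = p") (auto simp: Tpaths_mem nth_tl)

lemma tau_2:
  assumes tau: "\<tau> \<in> Tpaths Q' E' q b" and t1: "\<tau> ! 1 = p"
  shows "\<tau> ! 2 \<noteq> q" "length \<tau> \<ge> 3"
proof -
  have len: "length \<tau> \<ge> 2" and lst: "last \<tau> = b" using tau unfolding Tpaths_mem by auto
  have "b \<noteq> p" using b_side pq_cases by (auto simp: oo_iff)
  show l3: "length \<tau> \<ge> 3"
  proof (rule ccontr)
    assume "\<not> 3 \<le> length \<tau>"
    then have "length \<tau> = 2" using len by simp
    then have "last \<tau> = \<tau> ! 1" by (cases \<tau>) (auto simp: last_conv_nth)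
    then show False using lst t1 \<open>b \<noteq> p\<close> by simp
  qed
  have "crosses (step \<tau> 1) {q,b}" using tau l3 unfolding Tpaths_mem by auto
  then have "q \<notin> step \<tau> 1" by (rule crosses_distinct)
  then show "\<tau> ! 2 \<noteq> q" unfolding step_def numeral_2_eq_2 by auto
qed

lemma ext_inj: "inj_on ext (Tpaths Q' E' q b)"
proof (rule inj_onI)
  fix \<tau>1 \<tau>2 assume t1: "\<tau>1 \<in> Tpaths Q' E' q b" and t2: "\<tau>2 \<in> Tpaths Q' E' q b" and eq: "ext \<tau>1 = ext \<tau>2"
  have h1: "hd \<tau>1 = q" "\<tau>1 \<noteq> []" and h2: "hd \<tau>2 = q" "\<tau>2 \<noteq> []" using t1 t2 unfolding Tpaths_mem by auto
  have c1: "\<tau>1 = q # tl \<tau>1" using h1 by (cases \<tau>1) auto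
  have c2: "\<tau>2 = q # tl \<tau>2" using h2 by (cases \<tau>2) auto
  have e2: "\<And>\<tau>. \<tau> \<in> Tpaths Q' E' q b \<Longrightarrow> (ext \<tau> ! 2 = q \<longleftrightarrow> \<tau> ! 1 \<noteq> p)"
  proof -
    fix \<tau> assume t: "\<tau> \<in> Tpaths Q' E' q b"
    have "hd \<tau> = q" "\<tau> \<noteq> []" using t unfolding Tpaths_mem by auto
    then have c: "\<tau> = q # tl \<tau>" by (cases \<tau>) auto
    show "ext \<tau> ! 2 = q \<longleftrightarrow> \<tau> ! 1 \<noteq> p"
    proof (cases "\<tau> ! 1 = p")
      case True
      have "\<tau> ! 2 \<noteq> q" "length \<tau> \<ge> 3" using tau_2[OF t True] by auto
      then have "ext \<tau> ! 2 \<noteq> q" using True by (simp add: numeral_2_eq_2 nth_tl)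
      then show ?thesis using True by simp
    next
      case False
      then show ?thesis using c by (simp add: numeral_2_eq_2) (metis nth_Cons_0)
    qed
  qed
  show "\<tau>1 = \<tau>2"
  proof (cases "\<tau>1 ! 1 = p")
    case True
    then have "\<tau>2 ! 1 = p" using e2[OF t1] e2[OF t2] eq by metis
    then have "tl \<tau>1 = tl \<tau>2" using True eq by simp
    then show ?thesis using c1 c2 by metis
  next
    case False
    then have "\<tau>2 ! 1 \<noteq> p" using e2[OF t1] e2[OF t2] eq by metis
    then show ?thesis using False eq by simp
  qed
qed

end

lemma G3c:
  assumes "cyc_oo x b y" "cyc_oo y a x" "q = x \<or> q = y"
    "cyc_cc x s y" "cyc_cc x t y" "crosses {s,t} {a,b}" "q \<noteq> s" "q \<noteq> t"
  shows "crosses {s,t} {q,b}"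
  using assms unfolding geo_simps by (smt (verit) lin_facts)

lemma B3c:
  assumes "cyc_oo x b y" "cyc_oo y a x" "q = x \<or> q = y" "cyc_cc x s y" "cyc_cc x t y" "crosses {s,t} {a,b}"
    "q \<in> side_towards {s,t} b"
  shows "s = q \<or> t = q"
proof -
  from assms(6) have "cyc_oo s b t \<or> cyc_oo t b s" unfolding geo_simps by (smt (verit) lin_facts)
  then show ?thesis
  proof
    assume h: "cyc_oo s b t"
    then have "cyc_cc s q t" using assms(7) side_eq by fastforce
    then show ?thesis using assms(1-6) h unfolding geo_simps by (smt (verit) lin_facts)
  next
    assume h: "cyc_oo t b s"
    then have "cyc_cc t q s" using assms(7) side_eq[of t b s] by (auto simp: insert_commute)
    then show ?thesis using assms(1-6) h unfolding geo_simps by (smt (verit) lin_facts)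
  qed
qed

lemma Tpath_cons: "length xs \<ge> 2 \<Longrightarrow> xs = xs ! 0 # xs ! 1 # drop 2 xs"
  by (cases xs; cases "tl xs") auto

locale bwd_setting = fwd_setting +
  assumes HE: "\<And>c v. c \<in> E \<Longrightarrow> v \<in> c \<Longrightarrow> cyc_cc x v y"
    and E_eq: "E = insert {x,y} E'"
begin

lemma xy_in: "x \<in> Q'" "y \<in> Q'" using xyQ by (auto simp: cc_iff)
lemma pq_cases_q: "q = x \<or> q = y" using pq_cases by auto
lemma pq_cases_p: "p = x \<or> p = y" using pq_cases by auto

lemma allW:
  assumes pi: "\<pi> \<in> Tpaths Q E a b" and k: "1 \<le> k" "k < length \<pi>"
  shows "\<pi> ! k \<in> Q'"
proof -
  have "\<pi> ! k \<in> Q" using pi k unfolding Tpaths_mem by auto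
  moreover have "cyc_cc x (\<pi> ! k) y"
  proof (cases "k = length \<pi> - 1")
    case True
    have "\<pi> \<noteq> []" using k by auto
    then have "\<pi> ! k = last \<pi>" using True by (simp add: last_conv_nth)
    then show ?thesis using pi b_side unfolding Tpaths_mem by (auto simp: cc_iff)
  next
    case False
    show ?thesis
    proof (cases "odd k")
      case True
      then have "step \<pi> k \<in> E" using pi k False unfolding Tpaths_mem by auto
      then show ?thesis using HE unfolding step_def by auto
    next
      case ev: False
      then obtain j where kj: "k = Suc j" "odd j" using k by (cases k) auto
      then have "step \<pi> j \<in> E" using pi k False unfolding Tpaths_mem by auto
      then show ?thesis using HE kj unfolding step_def by auto
    qed
  qed
  ultimately show ?thesis by simp
qed

lemma step_diag_Q':
  assumes pi: "\<pi> \<in> Tpaths Q E a b" and k: "1 \<le> k" "k < length \<pi> - 1"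
  shows "step \<pi> k \<in> diag Q'"
proof -
  have "step \<pi> k \<in> diag Q" using pi k unfolding Tpaths_mem by auto
  then have "\<pi> ! k \<noteq> \<pi> ! Suc k" unfolding step_def diag_mem by (auto simp: doubleton_eq_iff)
  moreover have "\<pi> ! k \<in> Q'" "\<pi> ! Suc k \<in> Q'" using allW[OF pi] k by auto
  ultimately show ?thesis unfolding step_def diag_mem by blast
qed

lemma p1:
  assumes pi: "\<pi> \<in> Tpaths Q E a b"
  shows "\<pi> ! 1 = x \<or> \<pi> ! 1 = y"
proof -
  have len: "length \<pi> \<ge> 2" and h: "hd \<pi> = a" using pi unfolding Tpaths_mem by auto
  have "\<pi> ! 1 \<in> Q'" using allW[OF pi] len by auto
  moreover have "\<not> crosses (step \<pi> 0) {x,y}" using pi e_in len unfolding Tpaths_mem by auto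
  moreover have "\<pi> ! 0 = a" using h len by (cases \<pi>) auto
  moreover have "a \<noteq> \<pi> ! 1" using calculation(1) pq_in(5) by auto
  ultimately show ?thesis using B1[OF a_side, of "\<pi> ! 1"] xy unfolding step_def by auto
qed

lemma odd_facts:
  assumes pi: "\<pi> \<in> Tpaths Q E a b" and k: "odd k" "k < length \<pi> - 1"
  shows "step \<pi> k \<in> E" "crosses (step \<pi> k) {a,b}"
    "q \<notin> step \<pi> k \<Longrightarrow> crosses (step \<pi> k) {q,b}"
    "step \<pi> k \<noteq> {x,y} \<Longrightarrow> step \<pi> k \<in> E'"
proof -
  show sE: "step \<pi> k \<in> E" and cr: "crosses (step \<pi> k) {a,b}" using pi k unfolding Tpaths_mem by auto
  show "step \<pi> k \<noteq> {x,y} \<Longrightarrow> step \<pi> k \<in> E'" using sE E_eq by auto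
  assume qn: "q \<notin> step \<pi> k"
  have k1: "1 \<le> k" using k by (cases k) auto
  have "\<pi> ! k \<in> Q'" "\<pi> ! Suc k \<in> Q'" using allW[OF pi] k k1 by auto
  then show "crosses (step \<pi> k) {q,b}"
    using G3c[OF b_side a_side pq_cases_q, of "\<pi> ! k" "\<pi> ! Suc k"] cr qn unfolding step_def by auto
qed

lemma len3:
  assumes pi: "\<pi> \<in> Tpaths Q E a b" and p1: "\<pi> ! 1 = p"
  shows "length \<pi> \<ge> 3"
proof (rule ccontr)
  have len: "length \<pi> \<ge> 2" and lst: "last \<pi> = b" using pi unfolding Tpaths_mem by auto
  assume "\<not> 3 \<le> length \<pi>"
  then have "length \<pi> = 2" using len by simp
  then have "last \<pi> = \<pi> ! 1" by (cases \<pi>) (auto simp: last_conv_nth)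
  then show False using lst p1 b_side pq_cases by (auto simp: oo_iff)
qed

lemma stepdiag_ne:
  assumes pi: "\<pi> \<in> Tpaths Q E a b" and k: "k < length \<pi> - 1"
  shows "\<pi> ! k \<noteq> \<pi> ! Suc k"
  using pi k unfolding Tpaths_mem step_def diag_mem by (auto simp: doubleton_eq_iff)

lemma bwdA:
  assumes pi: "\<pi> \<in> Tpaths Q E a b" and p1: "\<pi> ! 1 = p" and p2: "\<pi> ! 2 = q"
  shows "drop 2 \<pi> \<in> Tpaths Q' E' q b" "(drop 2 \<pi>) ! 1 \<noteq> p" "\<pi> = a # p # drop 2 \<pi>"
proof -
  define n where "n = length \<pi>"
  have len: "n \<ge> 2" and hd: "hd \<pi> = a" and lst: "last \<pi> = b" using pi unfolding Tpaths_mem n_def by auto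
  have dt: "\<And>k l. k < n - 1 \<Longrightarrow> l < n - 1 \<Longrightarrow> k \<noteq> l \<Longrightarrow> step \<pi> k \<noteq> step \<pi> l"
    using pi unfolding Tpaths_mem n_def by blast
  have n4: "n \<ge> 4"
  proof (rule ccontr)
    assume "\<not> 4 \<le> n"
    then have "n = 3" using len3[OF pi p1] n_def by simp
    then have "last \<pi> = \<pi> ! 2" unfolding n_def by (cases \<pi>) (auto simp: last_conv_nth)
    then show False using lst p2 b_side pq_cases by (auto simp: oo_iff)
  qed
  have h0: "\<pi> ! 0 = a" using hd len n_def by (cases \<pi>) auto
  show pc: "\<pi> = a # p # drop 2 \<pi>" using Tpath_cons[of \<pi>] len h0 p1 n_def by simp
  define \<tau> where "\<tau> = drop 2 \<pi>"
  have lt: "length \<tau> = n - 2" unfolding \<tau>_def n_def by simp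
  have tn: "\<And>j. j < n - 2 \<Longrightarrow> \<tau> ! j = \<pi> ! Suc (Suc j)" unfolding \<tau>_def n_def by simp
  have ts: "\<And>j. j < n - 3 \<Longrightarrow> step \<tau> j = step \<pi> (Suc (Suc j))" unfolding step_def using tn by simp
  have s1: "step \<pi> 1 = {x,y}" unfolding step_def using p1 p2 pq by (simp add: numeral_2_eq_2)
  have s2: "step \<pi> 2 = {q, \<pi> ! 3}" unfolding step_def using p2 by (simp add: numeral_3_eq_3 numeral_2_eq_2)
  have "2 < length \<pi> - 1" using n4 n_def by simp
  then have "\<pi> ! 2 \<noteq> \<pi> ! 3" using stepdiag_ne[OF pi, of 2] by (simp add: numeral_3_eq_3)
  then have p3: "\<pi> ! 3 \<noteq> q" using p2 by simp
  show "\<tau> ! 1 \<noteq> p" unfolding \<tau>_def[symmetric]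
  proof
    assume "\<tau> ! 1 = p"
    then have "\<pi> ! 3 = p" using tn[of 1] n4 by (simp add: numeral_3_eq_3)
    then have "step \<pi> 2 = step \<pi> 1" using s1 s2 pq by (simp add: insert_commute)
    moreover have "2 < n - 1" "1 < n - 1" using n4 by arith+
    ultimately show False using dt[of 2 1] by simp
  qed
  have s3: "step \<pi> 3 = {\<pi> ! 3, \<pi> ! 4}" unfolding step_def by (simp add: numeral_3_eq_3 numeral_Bit0)
  have s3q: "q \<notin> step \<pi> 3" if n3: "3 < n - 1"
  proof
    assume "q \<in> step \<pi> 3"
    then have "\<pi> ! 4 = q" using p3 s3 by auto
    then have "step \<pi> 3 = step \<pi> 2" using s2 s3 by (simp add: insert_commute)
    then show False using dt[of 3 2] n3 by simp
  qed
  have qn: "q \<notin> step \<pi> k" if k: "odd k" "3 \<le> k" "k < n - 1" for k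
  proof (cases "k = 3")
    case True then show ?thesis using s3q k by simp
  next
    case False
    have n3: "3 < n - 1" using k by simp
    have "cross_before a b (step \<pi> 3) (step \<pi> k)" using pi k False n3 unfolding Tpaths_mem n_def by auto
    then have sub: "step \<pi> k \<subseteq> side_towards (step \<pi> 3) b" unfolding cross_before_def by simp
    show ?thesis
    proof
      assume "q \<in> step \<pi> k"
      then have qs: "q \<in> side_towards {\<pi> ! 3, \<pi> ! 4} b" using sub s3 by auto
      have W: "cyc_cc x (\<pi> ! 3) y" "cyc_cc x (\<pi> ! 4) y" using allW[OF pi, of 3] allW[OF pi, of 4] n3 n_def by auto
      have "crosses {\<pi> ! 3, \<pi> ! 4} {a,b}" using odd_facts(2)[OF pi, of 3] n3 s3 n_def by simp
      then have "\<pi> ! 3 = q \<or> \<pi> ! 4 = q" using B3c[OF b_side a_side pq_cases_q W] qs by blast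
      then show False using s3q[OF n3] s3 by auto
    qed
  qed
  have lt2: "2 \<le> length \<tau>" using lt n4 by simp
  have "\<tau> \<in> Tpaths Q' E' q b"
    unfolding Tpaths_mem
  proof (intro conjI allI impI ballI)
    show "2 \<le> length \<tau>" by (rule lt2)
    show "hd \<tau> = q" unfolding \<tau>_def using p2 n4 n_def by (simp add: hd_drop_conv_nth)
    show "last \<tau> = b" unfolding \<tau>_def using lst n4 n_def by simp
    show "set \<tau> \<subseteq> Q'"
    proof
      fix v assume "v \<in> set \<tau>"
      then obtain j where j: "j < length \<tau>" "v = \<tau> ! j" by (auto simp: in_set_conv_nth)
      then show "v \<in> Q'" using tn[of j] lt allW[OF pi, of "Suc (Suc j)"] n_def by auto
    qed
  next
    fix k assume k: "k < length \<tau> - 1"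
    then show "step \<tau> k \<in> diag Q'" using ts[of k] step_diag_Q'[OF pi, of "Suc (Suc k)"] lt n_def by simp
  next
    fix k l assume "k < length \<tau> - 1" "l < length \<tau> - 1" "k \<noteq> l"
    then show "step \<tau> k \<noteq> step \<tau> l" using ts[of k] ts[of l] dt[of "Suc (Suc k)" "Suc (Suc l)"] lt by simp
  next
    fix k d assume k: "k < length \<tau> - 1" and d: "d \<in> E'"
    then show "\<not> crosses (step \<tau> k) d" using ts[of k] pi E'_sub lt n_def unfolding Tpaths_mem by auto
  next
    fix k assume k: "k < length \<tau> - 1" and o: "odd k"
    have k2: "odd (Suc (Suc k))" "Suc (Suc k) < length \<pi> - 1" "3 \<le> Suc (Suc k)" using k o lt n_def by (auto simp: odd_pos Suc_le_eq)
    have "step \<pi> (Suc (Suc k)) \<noteq> {x,y}" using dt[of "Suc (Suc k)" 1] s1 k2 n_def by auto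
    then show "step \<tau> k \<in> E'" using odd_facts(4)[OF pi k2(1,2)] ts[of k] k lt by simp
    show "crosses (step \<tau> k) {q, b}" using odd_facts(3)[OF pi k2(1,2)] qn[OF k2(1,3)] ts[of k] k lt n_def by simp
  next
    fix k l assume k: "k < length \<tau> - 1" and l: "l < length \<tau> - 1" and o: "odd k \<and> odd l \<and> k < l"
    have "cross_before a b (step \<pi> (Suc (Suc k))) (step \<pi> (Suc (Suc l)))"
      using pi k l o lt n_def unfolding Tpaths_mem by auto
    moreover have "k < n - 3" "l < n - 3" using k l lt by auto
    ultimately show "cross_before q b (step \<tau> k) (step \<tau> l)" using ts[of k] ts[of l] cross_before_indep by metis
  qed
  then show "drop 2 \<pi> \<in> Tpaths Q' E' q b" unfolding \<tau>_def .
qed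

lemma bwdB:
  assumes pi: "\<pi> \<in> Tpaths Q E a b" and p1: "\<pi> ! 1 = p" and p2: "\<pi> ! 2 \<noteq> q"
  shows "q # tl \<pi> \<in> Tpaths Q' E' q b" "(q # tl \<pi>) ! 1 = p" "\<pi> = a # tl (q # tl \<pi>)"
proof -
  define n where "n = length \<pi>"
  have len: "n \<ge> 2" and hd: "hd \<pi> = a" and lst: "last \<pi> = b" using pi unfolding Tpaths_mem n_def by auto
  have n3: "n \<ge> 3" using len3[OF pi p1] n_def by simp
  have dt: "\<And>k l. k < n - 1 \<Longrightarrow> l < n - 1 \<Longrightarrow> k \<noteq> l \<Longrightarrow> step \<pi> k \<noteq> step \<pi> l"
    using pi unfolding Tpaths_mem n_def by blast
  have ne: "\<pi> \<noteq> []" using len n_def by auto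
  have h0: "\<pi> ! 0 = a" using hd ne by (cases \<pi>) auto
  show "\<pi> = a # tl (q # tl \<pi>)" using h0 ne by (cases \<pi>) auto
  show "(q # tl \<pi>) ! 1 = p" using p1 ne by (cases \<pi>) auto
  define \<tau> where "\<tau> = q # tl \<pi>"
  have lt: "length \<tau> = n" unfolding \<tau>_def n_def using ne by simp
  have tS: "\<And>j. \<tau> ! Suc j = \<pi> ! Suc j" unfolding \<tau>_def using ne by (cases \<pi>) auto
  have tsS: "\<And>j. step \<tau> (Suc j) = step \<pi> (Suc j)" unfolding step_def using tS by simp
  have ts0: "step \<tau> 0 = {x,y}" unfolding step_def \<tau>_def using p1 ne pq by (cases \<pi>) (auto simp: insert_commute)
  have n1: "1 < n - 1" using n3 by arith
  have p2W: "\<pi> ! 2 \<in> Q'" using allW[OF pi, of 2] n3 n_def by simp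
  have p2p: "\<pi> ! 2 \<noteq> p" using stepdiag_ne[OF pi, of 1] n1 p1 n_def by (simp add: numeral_2_eq_2)
  have s1: "step \<pi> 1 = {p, \<pi> ! 2}" unfolding step_def using p1 by (simp add: numeral_2_eq_2)
  have cr1: "crosses {p, \<pi> ! 2} {a,b}" using odd_facts(2)[OF pi, of 1] n1 s1 n_def by simp
  have qn: "q \<notin> step \<pi> k" if k: "odd k" "k < n - 1" for k
  proof (cases "k = 1")
    case True then show ?thesis using s1 p2 pq(2) by auto
  next
    case False
    then have "cross_before a b (step \<pi> 1) (step \<pi> k)" using pi k n1 odd_pos[OF k(1)] unfolding Tpaths_mem n_def by auto
    then have sub: "step \<pi> k \<subseteq> side_towards {p, \<pi> ! 2} b" unfolding cross_before_def s1 by simp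
    have n2: "\<pi> ! 2 \<noteq> x" "\<pi> ! 2 \<noteq> y" using p2p p2 pq_cases by auto
    have W2: "cyc_cc x (\<pi> ! 2) y" using p2W by simp
    have "q \<notin> side_towards {p, \<pi> ! 2} b"
      by (rule B4[OF b_side a_side pq_cases_p xy W2 n2 cr1 _ pq_cases_q]) (use pq(2) in auto)
    then show ?thesis using sub by auto
  qed
  have bq: "b \<noteq> q" using b_side pq_cases by (auto simp: oo_iff)
  have e_not: "step \<pi> k \<noteq> {x,y}" if k: "k < n - 1" for k
  proof
    assume sk: "step \<pi> k = {x,y}"
    show False
    proof (cases "k = 0")
      case True
      then have "a \<in> {x,y}" using sk h0 unfolding step_def by auto
      then show False using a_not by (auto simp: cc_iff)
    next
      case k0: False
      show False
      proof (cases "odd k")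
        case True
        then show False using qn[OF True k] sk pq_cases_q by auto
      next
        case False
        show False
        proof (rule no_even_edge[of \<pi> b q k p])
          show "2 \<le> length \<pi>" "last \<pi> = b" "q \<noteq> b" using len lst bq n_def by auto
          show "even k" "1 \<le> k" "k < length \<pi> - 1" using False k0 k n_def by auto
          show "step \<pi> k = {p,q}" by (simp only: sk pq)
          show "\<And>j. odd j \<Longrightarrow> j < length \<pi> - 1 \<Longrightarrow> k \<le> j + 1 \<Longrightarrow> q \<notin> step \<pi> j" using qn n_def by auto
        qed
      qed
    qed
  qed
  have "\<tau> \<in> Tpaths Q' E' q b"
    unfolding Tpaths_mem
  proof (intro conjI allI impI ballI)
    show "2 \<le> length \<tau>" using lt len by simp
    show "hd \<tau> = q" unfolding \<tau>_def by simp
    show "last \<tau> = b" unfolding \<tau>_def using lst ne n3 n_def by (cases \<pi>) auto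
    show "set \<tau> \<subseteq> Q'"
    proof
      fix v assume "v \<in> set \<tau>"
      then obtain j where j: "j < length \<tau>" "v = \<tau> ! j" by (auto simp: in_set_conv_nth)
      show "v \<in> Q'"
      proof (cases j)
        case 0 then show ?thesis using j pq_in unfolding \<tau>_def by simp
      next
        case (Suc i)
        then have "1 \<le> j" "j < length \<pi>" using j lt n_def by auto
        then show ?thesis using j tS allW[OF pi, of j] Suc by simp
      qed
    qed
  next
    fix k assume k: "k < length \<tau> - 1"
    show "step \<tau> k \<in> diag Q'"
    proof (cases k)
      case 0 then show ?thesis using ts0 xy_in xy unfolding diag_mem by blast
    next
      case (Suc i) then show ?thesis using tsS step_diag_Q'[OF pi, of k] k lt n_def by simp
    qed
  next
    fix k l assume k: "k < length \<tau> - 1" and l: "l < length \<tau> - 1" and kl: "k \<noteq> l"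
    show "step \<tau> k \<noteq> step \<tau> l"
    proof (cases k)
      case 0
      then obtain j where "l = Suc j" using kl by (cases l) auto
      moreover have "l < n - 1" using l lt by simp
      ultimately show ?thesis using 0 ts0 tsS e_not[of l] by simp
    next
      case (Suc i)
      show ?thesis
      proof (cases l)
        case 0
        moreover have "k < n - 1" using k lt by simp
        ultimately show ?thesis using Suc ts0 tsS e_not[of k] by simp
      next
        case (Suc j) then show ?thesis using \<open>k = Suc i\<close> tsS dt[of k l] k l kl lt by auto
      qed
    qed
  next
    fix k d assume k: "k < length \<tau> - 1" and d: "d \<in> E'"
    show "\<not> crosses (step \<tau> k) d"
    proof (cases k)
      case 0 then show ?thesis using ts0 E_nc e_in d E'_sub by auto
    next
      case (Suc i) then show ?thesis using tsS pi k d E'_sub lt n_def unfolding Tpaths_mem by auto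
    qed
  next
    fix k assume k: "k < length \<tau> - 1" and o: "odd k"
    then obtain i where ki: "k = Suc i" by (cases k) auto
    have k': "k < length \<pi> - 1" using k lt n_def by simp
    show "step \<tau> k \<in> E'" using odd_facts(4)[OF pi o k'] e_not[of k] k' tsS ki n_def by simp
    show "crosses (step \<tau> k) {q, b}" using odd_facts(3)[OF pi o k'] qn[OF o] k' tsS ki n_def by simp
  next
    fix k l assume k: "k < length \<tau> - 1" and l: "l < length \<tau> - 1" and o: "odd k \<and> odd l \<and> k < l"
    then obtain i j where ij: "k = Suc i" "l = Suc j" by (cases k; cases l) auto
    have "cross_before a b (step \<pi> k) (step \<pi> l)" using pi k l o lt n_def unfolding Tpaths_mem by auto
    then show "cross_before q b (step \<tau> k) (step \<tau> l)" using tsS ij cross_before_indep by metis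
  qed
  then show "q # tl \<pi> \<in> Tpaths Q' E' q b" unfolding \<tau>_def .
qed

lemma bwd:
  assumes pi: "\<pi> \<in> Tpaths Q E a b" and p1: "\<pi> ! 1 = p"
  shows "\<pi> \<in> ext ` Tpaths Q' E' q b"
proof (cases "\<pi> ! 2 = q")
  case True
  note A = bwdA[OF pi p1 True]
  have x: "\<pi> = ext (drop 2 \<pi>)" using A(2) A(3) by simp
  show ?thesis by (subst x) (rule imageI[OF A(1)])
next
  case False
  note B = bwdB[OF pi p1 False]
  have x: "\<pi> = ext (q # tl \<pi>)" using B(2) B(3) by simp
  show ?thesis by (subst x) (rule imageI[OF B(1)])
qed

end

lemma edge_pt: "cyc_cc \<eta> e \<zeta> \<Longrightarrow> cyc_oo \<zeta> e \<eta> \<Longrightarrow> False"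
  unfolding geo_simps by (smt (verit) lin_facts)

lemma sf_distrib_left: "(c::'k::semifield) * (a + b) = c * a + c * b"
  using sf_distrib[of a b c] by (simp add: mult.commute)

theorem lemma3p9:
  fixes V :: "'v::linorder set" and D D2 :: "'v set set" and \<zeta> \<eta> \<alpha> \<beta> :: 'v
    and f :: "'v set \<Rightarrow> 'k::semifield"
  assumes "polygon V"
    and "dissection V D" and "D \<noteq> {}"
    and "{\<zeta>, \<eta>} \<in> D"
    and "D = insert {\<zeta>, \<eta>} D2"
    and "polygon {e \<in> V. cyc_cc \<eta> e \<zeta>}"
    and "dissection {e \<in> V. cyc_cc \<eta> e \<zeta>} D2"
    and "\<alpha> \<in> {e \<in> V. cyc_oo \<zeta> e \<eta>}"
    and "\<beta> \<in> {e \<in> V. cyc_oo \<eta> e \<zeta>}"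
    and "T_formula {e \<in> V. cyc_cc \<eta> e \<zeta>} D2 f"
  shows "inverse (f {\<zeta>, \<eta>}) * (f {\<alpha>, \<zeta>} * f {\<eta>, \<beta>} + f {\<alpha>, \<eta>} * f {\<zeta>, \<beta>})
           = nesum (tweight f) (Tpaths V D \<alpha> \<beta>)"
proof -
  note polV = assms(1) and disV = assms(2) and dD = assms(4) and Deq = assms(5)
    and disW = assms(7) and al = assms(8) and be = assms(9) and TF = assms(10)
  define W where "W = {e \<in> V. cyc_cc \<eta> e \<zeta>}"
  have finV: "finite V" using polV unfolding polygon_def by simp
  have finW: "finite W" using finV W_def by simp
  have Ddiag: "\<And>c. c \<in> D \<Longrightarrow> c \<in> diag V" using disV unfolding dissection_def internal_def by blast
  have Dnc: "\<And>c1 c2. c1 \<in> D \<Longrightarrow> c2 \<in> D \<Longrightarrow> \<not> crosses c1 c2" using disV unfolding dissection_def by blast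
  have D2diag: "\<And>c. c \<in> D2 \<Longrightarrow> c \<in> diag W" using disW unfolding dissection_def internal_def W_def by blast
  have D2int: "\<And>c. c \<in> D2 \<Longrightarrow> internal W c" using disW unfolding dissection_def W_def by blast
  have zeta_eta: "\<zeta> \<noteq> \<eta>" "\<zeta> \<in> V" "\<eta> \<in> V" using Ddiag[OF dD] unfolding diag_mem by (auto simp: doubleton_eq_iff)
  have al': "cyc_oo \<zeta> \<alpha> \<eta>" "\<alpha> \<in> V" and be': "cyc_oo \<eta> \<beta> \<zeta>" "\<beta> \<in> V" using al be by auto
  have zW: "\<zeta> \<in> W" "\<eta> \<in> W" "\<beta> \<in> W" using zeta_eta be' unfolding W_def by (auto simp: cc_iff)
  have d_edge: "is_edge W {\<zeta>,\<eta>}"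
    unfolding is_edge_def
  proof (intro conjI exI)
    show "{\<zeta>,\<eta>} \<in> diag W" using zW zeta_eta unfolding diag_mem by blast
    show "\<not> (\<exists>e\<in>W. cyc_oo \<zeta> e \<eta>)" using edge_pt unfolding W_def by blast
  qed simp
  have d_notin: "{\<eta>,\<zeta>} \<notin> D2" using D2int d_edge unfolding internal_def by (metis insert_commute)
  have HE: "\<And>c v. c \<in> D \<Longrightarrow> v \<in> c \<Longrightarrow> cyc_cc \<eta> v \<zeta>"
  proof -
    fix c v assume "c \<in> D" "v \<in> c"
    then have "c = {\<zeta>,\<eta>} \<or> c \<in> D2" using Deq by auto
    then show "cyc_cc \<eta> v \<zeta>"
    proof
      assume "c = {\<zeta>,\<eta>}" then show ?thesis using \<open>v \<in> c\<close> by (auto simp: cc_iff)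
    next
      assume "c \<in> D2" then show ?thesis using D2diag \<open>v \<in> c\<close> unfolding W_def diag_mem by auto
    qed
  qed
  have Deq': "D = insert {\<eta>,\<zeta>} D2" using Deq by (simp add: insert_commute)
  interpret i1: bwd_setting V D D2 \<eta> \<zeta> \<alpha> \<beta> \<zeta> \<eta>
  proof
    show "{\<eta>,\<zeta>} \<in> D" using dD by (simp add: insert_commute)
  qed (use Ddiag Dnc zeta_eta al' be' HE d_notin Deq' in \<open>auto simp: insert_commute\<close>)
  interpret i2: bwd_setting V D D2 \<eta> \<zeta> \<alpha> \<beta> \<eta> \<zeta>
  proof
    show "{\<eta>,\<zeta>} \<in> D" using dD by (simp add: insert_commute)
  qed (use Ddiag Dnc zeta_eta al' be' HE d_notin Deq' in \<open>auto simp: insert_commute\<close>)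
  define T1 where "T1 = Tpaths W D2 \<eta> \<beta>"
  define T2 where "T2 = Tpaths W D2 \<zeta> \<beta>"
  define e1 where "e1 = (\<lambda>\<tau>. if \<tau> ! 1 = \<zeta> then \<alpha> # tl \<tau> else \<alpha> # \<zeta> # \<tau>)"
  define e2 where "e2 = (\<lambda>\<tau>. if \<tau> ! 1 = \<eta> then \<alpha> # tl \<tau> else \<alpha> # \<eta> # \<tau>)"
  have D2nc: "\<forall>c1\<in>D2. \<forall>c2\<in>D2. \<not> crosses c1 c2" using Dnc Deq by auto
  have T1ne: "T1 \<noteq> {}" unfolding T1_def
    by (rule Tpaths_exist) (use finW D2diag D2nc zW be' in \<open>auto simp: oo_iff\<close>)
  have T2ne: "T2 \<noteq> {}" unfolding T2_def
    by (rule Tpaths_exist) (use finW D2diag D2nc zW be' in \<open>auto simp: oo_iff\<close>)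
  have T1f: "finite T1" and T2f: "finite T2" unfolding T1_def T2_def using Tpaths_finite finW by auto
  have Weq: "{v \<in> V. cyc_cc \<eta> v \<zeta>} = W" unfolding W_def by simp
  have U: "Tpaths V D \<alpha> \<beta> = e1 ` T1 \<union> e2 ` T2"
  proof
    show "Tpaths V D \<alpha> \<beta> \<subseteq> e1 ` T1 \<union> e2 ` T2"
    proof
      fix \<pi> assume pi: "\<pi> \<in> Tpaths V D \<alpha> \<beta>"
      have "\<pi> ! 1 = \<eta> \<or> \<pi> ! 1 = \<zeta>" using i1.p1[OF pi] .
      then show "\<pi> \<in> e1 ` T1 \<union> e2 ` T2"
      proof
        assume "\<pi> ! 1 = \<zeta>"
        then show ?thesis using i1.bwd[OF pi] unfolding e1_def T1_def Weq by blast
      next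
        assume "\<pi> ! 1 = \<eta>"
        then show ?thesis using i2.bwd[OF pi] unfolding e2_def T2_def Weq by blast
      qed
    qed
    show "e1 ` T1 \<union> e2 ` T2 \<subseteq> Tpaths V D \<alpha> \<beta>"
      using i1.fwd1 i1.fwd2 i2.fwd1 i2.fwd2 unfolding e1_def e2_def T1_def T2_def Weq by auto
  qed
  have disj: "e1 ` T1 \<inter> e2 ` T2 = {}"
  proof -
    have "\<And>\<tau>. \<tau> \<in> T1 \<Longrightarrow> e1 \<tau> ! 1 = \<zeta>" using i1.ext_1 unfolding e1_def T1_def Weq by blast
    moreover have "\<And>\<tau>. \<tau> \<in> T2 \<Longrightarrow> e2 \<tau> ! 1 = \<eta>" using i2.ext_1 unfolding e2_def T2_def Weq by blast
    ultimately show ?thesis using zeta_eta by fastforce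
  qed
  have inj1: "inj_on e1 T1" using i1.ext_inj unfolding e1_def T1_def Weq by blast
  have inj2: "inj_on e2 T2" using i2.ext_inj unfolding e2_def T2_def Weq by blast
  define c1 where "c1 = f {\<alpha>,\<zeta>} * inverse (f {\<eta>,\<zeta>})"
  define c2 where "c2 = f {\<alpha>,\<eta>} * inverse (f {\<eta>,\<zeta>})"
  have w1: "\<And>\<tau>. \<tau> \<in> T1 \<Longrightarrow> tweight f (e1 \<tau>) = c1 * tweight f \<tau>"
    using i1.tweight_ext unfolding e1_def T1_def c1_def Weq by blast
  have w2: "\<And>\<tau>. \<tau> \<in> T2 \<Longrightarrow> tweight f (e2 \<tau>) = c2 * tweight f \<tau>"
    using i2.tweight_ext unfolding e2_def T2_def c2_def Weq by blast
  have f1: "f {\<eta>,\<beta>} = nesum (tweight f) T1"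
    using TF zW be' unfolding T_formula_def T1_def W_def by (auto simp: oo_iff)
  have f2: "f {\<zeta>,\<beta>} = nesum (tweight f) T2"
    using TF zW be' unfolding T_formula_def T2_def W_def by (auto simp: oo_iff)
  have "nesum (tweight f) (Tpaths V D \<alpha> \<beta>) = nesum (tweight f) (e1 ` T1) + nesum (tweight f) (e2 ` T2)"
    unfolding U by (rule nesum_union) (use T1f T2f T1ne T2ne disj in auto)
  also have "\<dots> = nesum (tweight f \<circ> e1) T1 + nesum (tweight f \<circ> e2) T2"
    using nesum_reindex[OF T1f T1ne inj1, of "tweight f"] nesum_reindex[OF T2f T2ne inj2, of "tweight f"]
    by (rule arg_cong2[where f="(+)"])
  also have "\<dots> = nesum (\<lambda>\<tau>. c1 * tweight f \<tau>) T1 + nesum (\<lambda>\<tau>. c2 * tweight f \<tau>) T2"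
    using nesum_cong[OF T1f T1ne, of "tweight f \<circ> e1" "\<lambda>\<tau>. c1 * tweight f \<tau>"]
      nesum_cong[OF T2f T2ne, of "tweight f \<circ> e2" "\<lambda>\<tau>. c2 * tweight f \<tau>"] w1 w2 by simp
  also have "\<dots> = c1 * f {\<eta>,\<beta>} + c2 * f {\<zeta>,\<beta>}"
    using nesum_mult[OF T1f T1ne, of c1 "tweight f"] nesum_mult[OF T2f T2ne, of c2 "tweight f"] f1 f2 by simp
  also have "\<dots> = inverse (f {\<zeta>, \<eta>}) * (f {\<alpha>, \<zeta>} * f {\<eta>, \<beta>} + f {\<alpha>, \<eta>} * f {\<zeta>, \<beta>})"
    unfolding c1_def c2_def sf_distrib_left by (simp add: insert_commute mult_ac)
  finally show ?thesis by simp
qed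


end
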